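(* Let $P$ be a nondegenerate polyhedron in $\mathbb{R}^3$ which is the image of a sphere-homeomorphic simplicial complex $K$, which is rigid, and for which there exists a sequence of flexible nondegenerate polyhedra $P_n$, each having the same combinatorial structure as $P$, with $P_n\to P$ as $n\to\infty$. Let $v$ be the number of vertices of $P$. Then there is no algebraic set $A\subset\mathbb{R}^{3v}$ such that $\varphi(F_{[\![P]\!]}) = A\cap\varphi([\![P]\!])$.
   Context: A polyhedron is a continuous mapping from a finite 2-dimensional simplicial complex $K$ into $\mathbb{R}^3$ that is affine on each simplex of $K$. Its vertices, edges and faces are the images of the vertices, edges and 2-simplices of $K$. A polyhedron is nondegenerate if every face is a nondegenerate (non-collinear) triangle. Two nondegenerate polyhedra have the same combinatorial structure if they are mappings from the same simplicial complex. A polyhedron is flexible if it admits a continuous deformation through polyhedra on the same complex keeping every face congruent to itself (all edge lengths preserved) that is not induced by isometries of $\mathbb{R}^3$; otherwise it is rigid. For a nondegenerate polyhedron $Q$ on a complex $K$ with $v$ vertices, $[\![Q]\!]$ denotes the set of all nondegenerate polyhedra with the same combinatorial structure as $Q$. Fixing an enumeration of the vertices of $K$, the map $\varphi:[\![Q]\!]\to\mathbb{R}^{3v}$ sends a polyhedron to the point listing the coordinates of its vertices in this order ($\varphi([\![Q]\!])$ is open in $\mathbb{R}^{3v}$). $F_{[\![Q]\!]}$ denotes the set of flexible polyhedra in $[\![Q]\!]$. Convergence $P_n\to P$ means $\varphi(P_n)\to\varphi(P)$ in $\mathbb{R}^{3v}$. An algebraic set in $\mathbb{R}^{3v}$ is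 the common zero set of a family of real polynomials in $3v$ variables. *)

theory Defs
  imports "HOL-Analysis.Analysis"
begin

definition simplicial_complex2 :: "nat \<Rightarrow> nat set set \<Rightarrow> bool" where
  "simplicial_complex2 v K \<longleftrightarrow>
     (\<forall>s\<in>K. s \<noteq> {} \<and> s \<subseteq> {..<v} \<and> card s \<le> 3) \<and>
     (\<forall>s\<in>K. \<forall>t. t \<noteq> {} \<and> t \<subseteq> s \<longrightarrow> t \<in> K) \<and>
     (\<forall>i<v. {i} \<in> K)"

text \<open>Geometric realization |K| via barycentric coordinates, as a subspace of the
  product space nat => real (on which the topology is the Euclidean one of R^v).\<close>

definition geom_realization :: "nat \<Rightarrow> nat set set \<Rightarrow> (nat \<Rightarrow> real) set" where
  "geom_realization v K =
     {t. (\<forall>i. 0 \<le> t i) \<and> (\<forall>i\<ge>v. t i = 0) \<and> (\<Sum>i<v. t i) = 1 \<and> {i. t i \<noteq> 0} \<in> K}"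

definition sphere_complex :: "nat \<Rightarrow> nat set set \<Rightarrow> bool" where
  "sphere_complex v K \<longleftrightarrow> simplicial_complex2 v K \<and>
     geom_realization v K homeomorphic sphere (0::real^3) 1"

text \<open>A polyhedron on K is determined by the positions of its vertices
  p :: nat => real^3 (only the values on {0..<v} are relevant); it is the
  map |K| -> R^3 affine on each simplex with these vertex images.\<close>

definition nondegenerate :: "nat set set \<Rightarrow> (nat \<Rightarrow> real^3) \<Rightarrow> bool" where
  "nondegenerate K p \<longleftrightarrow> (\<forall>s\<in>K. card s = 3 \<longrightarrow> \<not> collinear (p ` s))"

definition isometry3 :: "(real^3 \<Rightarrow> real^3) \<Rightarrow> bool" where
  "isometry3 g \<longleftrightarrow> (\<forall>x y. dist (g x) (g y) = dist x y)"

definition flexible :: "nat \<Rightarrow> nat set set \<Rightarrow> (nat \<Rightarrow> real^3) \<Rightarrow> bool" where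
  "flexible v K p \<longleftrightarrow>
     (\<exists>q :: real \<Rightarrow> nat \<Rightarrow> real^3.
        (\<forall>i<v. continuous_on {0..1} (\<lambda>t. q t i)) \<and>
        (\<forall>i<v. q 0 i = p i) \<and>
        (\<forall>t\<in>{0..1}. \<forall>i j. {i, j} \<in> K \<longrightarrow> dist (q t i) (q t j) = dist (p i) (p j)) \<and>
        \<not> (\<forall>t\<in>{0..1}. \<exists>g. isometry3 g \<and> (\<forall>i<v. q t i = g (p i))))"

text \<open>The coordinate map phi: vertex i contributes coordinates 3i, 3i+1, 3i+2.
  Points of R^(3v) are functions nat => real vanishing from index 3v on.\<close>

definition phi :: "nat \<Rightarrow> (nat \<Rightarrow> real^3) \<Rightarrow> (nat \<Rightarrow> real)" where
  "phi v p = (\<lambda>k. if k < 3 * v then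
       p (k div 3) $ (if k mod 3 = 0 then 1 else if k mod 3 = 1 then 2 else 3) else 0)"

inductive_set poly_fun :: "nat \<Rightarrow> ((nat \<Rightarrow> real) \<Rightarrow> real) set" for n :: nat where
  const: "(\<lambda>x. c) \<in> poly_fun n"
| var: "i < n \<Longrightarrow> (\<lambda>x. x i) \<in> poly_fun n"
| add: "f \<in> poly_fun n \<Longrightarrow> g \<in> poly_fun n \<Longrightarrow> (\<lambda>x. f x + g x) \<in> poly_fun n"
| mult: "f \<in> poly_fun n \<Longrightarrow> g \<in> poly_fun n \<Longrightarrow> (\<lambda>x. f x * g x) \<in> poly_fun n"

definition algebraic_set :: "nat \<Rightarrow> (nat \<Rightarrow> real) set \<Rightarrow> bool" where
  "algebraic_set n A \<longleftrightarrow>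
     (\<exists>F. F \<subseteq> poly_fun n \<and> A = {x. (\<forall>i\<ge>n. x i = 0) \<and> (\<forall>f\<in>F. f x = 0)})"

end

theory Submission
  imports Defs
begin

lemma tendsto_coord:
  fixes X :: "nat \<Rightarrow> nat \<Rightarrow> real"
  assumes "X \<longlonglongrightarrow> L"
  shows "(\<lambda>k. X k i) \<longlonglongrightarrow> L i"
proof -
  have "isCont (\<lambda>x::nat\<Rightarrow>real. x i) L"
    using continuous_on_product_coordinates[of i] continuous_on_eq_continuous_at open_UNIV
    by blast
  thus ?thesis using isCont_tendsto_compose assms by blast
qed

lemma poly_fun_tendsto:
  assumes "f \<in> poly_fun n"
  shows "\<And>X L. X \<longlonglongrightarrow> L \<Longrightarrow> (\<lambda>k. f (X k)) \<longlonglongrightarrow> f L"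
  using assms
proof (induction f rule: poly_fun.induct)
  case (const c) then show ?case by simp
next
  case (var i) then show ?case using tendsto_coord by blast
next
  case (add f g) then show ?case by (intro tendsto_add) auto
next
  case (mult f g) then show ?case by (intro tendsto_mult) auto
qed

lemma phi_eq:
  assumes "phi v q = phi v p" "i < v"
  shows "q i = p i"
proof -
  have c: "\<And>k. k < 3 * v \<Longrightarrow> (q (k div 3) $ (if k mod 3 = 0 then 1 else if k mod 3 = 1 then 2 else 3))
     = (p (k div 3) $ (if k mod 3 = 0 then 1 else if k mod 3 = 1 then 2 else 3))"
    using assms(1) unfolding phi_def by (metis (no_types, lifting))
  have 1: "q i $ 1 = p i $ 1" using c[of "3 * i"] assms(2) by simp
  have d1: "(3 * i + 1) div 3 = i" "(3 * i + 1) mod 3 = 1" by presburger+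
  have d2: "(3 * i + 2) div 3 = i" "(3 * i + 2) mod 3 = 2" by presburger+
  have 2: "q i $ 2 = p i $ 2" using c[of "3 * i+1"] assms(2) d1 by simp
  have 3: "q i $ 3 = p i $ 3" using c[of "3 * i+2"] assms(2) d2 by simp
  show ?thesis unfolding vec_eq_iff forall_3 using 1 2 3 by simp
qed

lemma flex_get:
  assumes "flexible v K q"
  obtains r :: "real \<Rightarrow> nat \<Rightarrow> real^3" where
    "(\<forall>i<v. continuous_on {0..1} (\<lambda>t. r t i)) \<and>
    (\<forall>i<v. r 0 i = q i) \<and>
    (\<forall>t\<in>{0..1}. \<forall>i j. {i, j} \<in> K \<longrightarrow> dist (r t i) (r t j) = dist (q i) (q j)) \<and>
    \<not> (\<forall>t\<in>{0..1}. \<exists>g. isometry3 g \<and> (\<forall>i<v. r t i = g (q i)))"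
  using assms unfolding flexible_def by (elim exE) (rule that)

lemma flex_put:
  fixes r :: "real \<Rightarrow> nat \<Rightarrow> real^3"
  assumes "(\<forall>i<v. continuous_on {0..1} (\<lambda>t. r t i)) \<and>
    (\<forall>i<v. r 0 i = p i) \<and>
    (\<forall>t\<in>{0..1}. \<forall>i j. {i, j} \<in> K \<longrightarrow> dist (r t i) (r t j) = dist (p i) (p j)) \<and>
    \<not> (\<forall>t\<in>{0..1}. \<exists>g. isometry3 g \<and> (\<forall>i<v. r t i = g (p i)))"
  shows "flexible v K p"
  unfolding flexible_def by (rule exI[of _ r]) (rule assms)

lemma edge_lt:
  assumes "simplicial_complex2 v K" "{i,j} \<in> K"
  shows "i < v \<and> j < v"
proof -
  have A: "\<forall>s\<in>K. s \<noteq> {} \<and> s \<subseteq> {..<v} \<and> card s \<le> 3"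
    using assms(1) unfolding simplicial_complex2_def by (rule conjunct1)
  have "{i,j} \<noteq> {} \<and> {i,j} \<subseteq> {..<v} \<and> card {i,j} \<le> 3" using A assms(2) by (rule bspec)
  hence "{i,j} \<subseteq> {..<v}" by (elim conjE)
  thus ?thesis by simp
qed

lemma flexible_restrict:
  assumes "simplicial_complex2 v K" "flexible v K q" "\<And>i. i < v \<Longrightarrow> q i = p i"
  shows "flexible v K p"
proof -
  obtain r :: "real \<Rightarrow> nat \<Rightarrow> real^3" where R:
    "(\<forall>i<v. continuous_on {0..1} (\<lambda>t. r t i)) \<and>
    (\<forall>i<v. r 0 i = q i) \<and>
    (\<forall>t\<in>{0..1}. \<forall>i j. {i, j} \<in> K \<longrightarrow> dist (r t i) (r t j) = dist (q i) (q j)) \<and>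
    \<not> (\<forall>t\<in>{0..1}. \<exists>g. isometry3 g \<and> (\<forall>i<v. r t i = g (q i)))"
    by (rule flex_get[OF assms(2)])
  have r1: "\<forall>i<v. continuous_on {0..1} (\<lambda>t. r t i)" using R by (elim conjE)
  have r2: "\<forall>i<v. r 0 i = q i" using R by (elim conjE)
  have r3: "\<forall>t\<in>{0..1}. \<forall>i j. {i, j} \<in> K \<longrightarrow> dist (r t i) (r t j) = dist (q i) (q j)"
    using R by (elim conjE)
  have r4: "\<not> (\<forall>t\<in>{0..1}. \<exists>g. isometry3 g \<and> (\<forall>i<v. r t i = g (q i)))"
    using R by (elim conjE)
  have c2: "\<forall>i<v. r 0 i = p i"
  proof (intro allI impI)
    fix i assume "i < v" thus "r 0 i = p i" using r2 assms(3)[of i] by simp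
  qed
  have c3: "\<forall>t\<in>{0..1}. \<forall>i j. {i, j} \<in> K \<longrightarrow> dist (r t i) (r t j) = dist (p i) (p j)"
  proof (intro ballI allI impI)
    fix t i j assume t: "t \<in> {0..1::real}" and e: "{i, j} \<in> K"
    have ij: "i < v \<and> j < v" by (rule edge_lt[OF assms(1) e])
    have "dist (r t i) (r t j) = dist (q i) (q j)" using r3 t e by blast
    moreover have "q i = p i" using ij assms(3) by blast
    moreover have "q j = p j" using ij assms(3) by blast
    ultimately show "dist (r t i) (r t j) = dist (p i) (p j)" by simp
  qed
  have c4: "\<not> (\<forall>t\<in>{0..1}. \<exists>g. isometry3 g \<and> (\<forall>i<v. r t i = g (p i)))"
  proof
    assume H: "\<forall>t\<in>{0..1}. \<exists>g. isometry3 g \<and> (\<forall>i<v. r t i = g (p i))"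
    have "\<forall>t\<in>{0..1}. \<exists>g. isometry3 g \<and> (\<forall>i<v. r t i = g (q i))"
      using H assms(3) by simp
    with r4 show False by blast
  qed
  show ?thesis by (rule flex_put[of v r p K, OF conjI[OF r1 conjI[OF c2 conjI[OF c3 c4]]]])
qed

theorem theorem2:
  fixes v :: nat and K :: "nat set set" and p :: "nat \<Rightarrow> real^3"
    and P :: "nat \<Rightarrow> nat \<Rightarrow> real^3"
  assumes "sphere_complex v K"
    and "nondegenerate K p"
    and "\<not> flexible v K p"
    and "\<And>n. nondegenerate K (P n) \<and> flexible v K (P n)"
    and "(\<lambda>n. phi v (P n)) \<longlonglongrightarrow> phi v p"
  shows "\<not> (\<exists>A. algebraic_set (3 * v) A \<and>
             phi v ` {q. nondegenerate K q \<and> flexible v K q}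
               = A \<inter> phi v ` {q. nondegenerate K q})"
proof
  assume "\<exists>A. algebraic_set (3 * v) A \<and>
             phi v ` {q. nondegenerate K q \<and> flexible v K q}
               = A \<inter> phi v ` {q. nondegenerate K q}"
  then obtain A F where F: "F \<subseteq> poly_fun (3 * v)"
    and A: "A = {x. (\<forall>i\<ge>(3 * v). x i = 0) \<and> (\<forall>f\<in>F. f x = 0)}"
    and E: "phi v ` {q. nondegenerate K q \<and> flexible v K q}
               = A \<inter> phi v ` {q. nondegenerate K q}"
    unfolding algebraic_set_def by blast
  have PA: "phi v (P n) \<in> A" for n
    using E assms(4)[of n] by blast
  have "phi v p \<in> A"
    unfolding A
  proof (intro CollectI conjI allI impI ballI)
    fix i assume "3 * v \<le> i" thus "phi v p i = 0" unfolding phi_def by simp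
  next
    fix f assume f: "f \<in> F"
    have "(\<lambda>n. f (phi v (P n))) \<longlonglongrightarrow> f (phi v p)"
      using poly_fun_tendsto f F assms(5) by blast
    moreover have "\<And>n. f (phi v (P n)) = 0" using PA f unfolding A by blast
    ultimately have "(\<lambda>n. 0::real) \<longlonglongrightarrow> f (phi v p)" by simp
    thus "f (phi v p) = 0" using LIMSEQ_unique tendsto_const by metis
  qed
  hence "phi v p \<in> phi v ` {q. nondegenerate K q \<and> flexible v K q}"
    using E assms(2) by blast
  then obtain q where q: "flexible v K q" "phi v q = phi v p" by auto
  have "flexible v K p"
  proof (rule flexible_restrict[of v K q p])
    show "simplicial_complex2 v K" using assms(1) unfolding sphere_complex_def by simp
    show "flexible v K q" by (rule q(1))
    show "q i = p i" if "i < v" for i using phi_eq[OF q(2) that] .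
  qed
  with assms(3) show False by blast
qed

end
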